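(* For $p,q\ge 0$ let $K_{p,q}$ be the complete bipartite graph with parts of sizes $p$ and $q$ (every vertex of one part adjacent to every vertex of the other, no edges within parts). Then $$\sum_{p\ge0}\sum_{q\ge0}\mathrm{sa}(K_{p,q})\,\frac{x^p}{p!}\frac{y^q}{q!} = \frac{\cosh x+\cosh y-1}{\cosh(x+y)}.$$
   Context: All graphs are finite, simple and undirected. For a graph $G=(V,E)$ and $V'\subseteq V$, $G|_{V'}$ denotes the induced subgraph on $V'$. The signed a-number $\mathrm{sa}(G)$ is defined recursively: $\mathrm{sa}(G)=1$ if $G$ is the empty graph (no vertices); $\mathrm{sa}(G)=0$ if $G$ has a connected component with an odd number of vertices; otherwise $\mathrm{sa}(G)=-\sum_{V'\subsetneq V}\mathrm{sa}(G|_{V'})$. *)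

theory Defs
  imports "HOL-Analysis.Analysis"
begin

text \<open>A finite simple graph is given by a vertex set V and a symmetric irreflexive
  edge relation E. The induced subgraph on V' \<subseteq> V is (V', E): edges are only
  ever considered between vertices of the current vertex set.\<close>

definition adj_in :: "'a set \<Rightarrow> ('a \<Rightarrow> 'a \<Rightarrow> bool) \<Rightarrow> 'a \<Rightarrow> 'a \<Rightarrow> bool" where
  "adj_in V E u v \<longleftrightarrow> u \<in> V \<and> v \<in> V \<and> E u v"

definition component_of :: "'a set \<Rightarrow> ('a \<Rightarrow> 'a \<Rightarrow> bool) \<Rightarrow> 'a \<Rightarrow> 'a set" where
  "component_of V E v = {u. (adj_in V E)\<^sup>*\<^sup>* v u}"

definition components :: "'a set \<Rightarrow> ('a \<Rightarrow> 'a \<Rightarrow> bool) \<Rightarrow> 'a set set" where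
  "components V E = component_of V E ` V"

function sa :: "'a set \<Rightarrow> ('a \<Rightarrow> 'a \<Rightarrow> bool) \<Rightarrow> int" where
  "sa V E = (if V = {} then 1
             else if \<not> finite V then 0
             else if (\<exists>C \<in> components V E. odd (card C)) then 0
             else - (\<Sum>V' \<in> {V'. V' \<subset> V}. sa V' E))"
  by pat_completeness auto
termination
  by (relation "Wellfounded.measure (\<lambda>(V, E). card V)") (auto intro: psubset_card_mono)

definition Kpq_V :: "nat \<Rightarrow> nat \<Rightarrow> (nat + nat) set" where
  "Kpq_V p q = Inl ` {..<p} \<union> Inr ` {..<q}"

definition Kpq_E :: "(nat + nat) \<Rightarrow> (nat + nat) \<Rightarrow> bool" where
  "Kpq_E u v \<longleftrightarrow> isl u \<noteq> isl v"

end

theory Submission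
  imports Defs
begin

declare sa.simps[simp del]

function fpq :: "nat \<Rightarrow> nat \<Rightarrow> int" where
  "fpq p q = (if p = 0 \<and> q = 0 then 1 else if p = 0 \<or> q = 0 then 0
     else if odd (p + q) then 0
     else - (\<Sum>ab \<in> ({..p} \<times> {..q}) - {(p,q)}. int ((p choose fst ab) * (q choose snd ab)) * fpq (fst ab) (snd ab)))"
  by pat_completeness auto
termination
  by (relation "Wellfounded.measure (\<lambda>(p, q). p + q)") (auto simp: le_less)

declare fpq.simps[simp del]

lemma fpq_odd: "odd (p + q) \<Longrightarrow> fpq p q = 0"
  by (subst fpq.simps) auto

lemma pow_card_sum:
  fixes h :: "nat \<Rightarrow> 'b::comm_ring_1"
  assumes "finite A"
  shows "(\<Sum>A'\<in>Pow A. h (card A')) = (\<Sum>a\<le>card A. of_nat (card A choose a) * h a)"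
proof -
  have "(\<Sum>A'\<in>Pow A. h (card A')) = (\<Sum>a\<le>card A. \<Sum>A'\<in>{A'. A' \<in> Pow A \<and> card A' = a}. h (card A'))"
    using assms by (intro sum.group[symmetric]) (auto intro: card_mono)
  also have "\<dots> = (\<Sum>a\<le>card A. of_nat (card A choose a) * h a)"
  proof (rule sum.cong[OF refl])
    fix a assume "a \<in> {..card A}"
    have "(\<Sum>A'\<in>{A'. A' \<in> Pow A \<and> card A' = a}. h (card A')) = (\<Sum>A'\<in>{A'. A' \<subseteq> A \<and> card A' = a}. h a)"
      by (intro sum.cong) auto
    also have "\<dots> = of_nat (card A choose a) * h a"
      using n_subsets[OF assms, of a] by simp
    finally show "(\<Sum>A'\<in>{A'. A' \<in> Pow A \<and> card A' = a}. h (card A')) = of_nat (card A choose a) * h a" .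
  qed
  finally show ?thesis .
qed

lemma sa_empty: "sa {} E = 1"
  by (subst sa.simps) simp

lemma sa_zero: "V \<noteq> {} \<Longrightarrow> finite V \<Longrightarrow> \<exists>C\<in>components V E. odd (card C) \<Longrightarrow> sa V E = 0"
  by (subst sa.simps) simp

lemma sa_rec: "V \<noteq> {} \<Longrightarrow> finite V \<Longrightarrow> \<not> (\<exists>C\<in>components V E. odd (card C)) \<Longrightarrow>
   sa V E = - (\<Sum>V' \<in> {V'. V' \<subset> V}. sa V' E)"
  by (subst sa.simps) simp

lemma fpq_axis: "p = 0 \<or> q = 0 \<Longrightarrow> fpq p q = (if p = 0 \<and> q = 0 then 1 else 0)"
  by (subst fpq.simps) auto

lemma fpq_rec: "p \<noteq> 0 \<Longrightarrow> q \<noteq> 0 \<Longrightarrow> even (p + q) \<Longrightarrow>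
  fpq p q = - (\<Sum>ab \<in> ({..p} \<times> {..q}) - {(p,q)}. int ((p choose fst ab) * (q choose snd ab)) * fpq (fst ab) (snd ab))"
  by (subst fpq.simps) simp

lemma rtranclp_nosucc: "(\<And>u. \<not> R v u) \<Longrightarrow> R\<^sup>*\<^sup>* v u \<longleftrightarrow> u = v"
  by (metis converse_rtranclpE rtranclp.rtrancl_refl)

lemma comp_sub: "component_of V E v \<subseteq> V \<union> {v}"
  unfolding component_of_def
proof
  fix u assume "u \<in> {u. (adj_in V E)\<^sup>*\<^sup>* v u}"
  then have "(adj_in V E)\<^sup>*\<^sup>* v u" by simp
  then show "u \<in> V \<union> {v}"
    by (induction rule: rtranclp_induct) (auto simp: adj_in_def)
qed

lemma components_one:
  assumes "A \<noteq> {}" "B \<noteq> {}"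
  shows "components (Inl ` A \<union> Inr ` B) Kpq_E = {Inl ` A \<union> Inr ` B}"
proof -
  let ?V = "Inl ` A \<union> Inr ` B"
  obtain a b where ab: "a \<in> A" "b \<in> B" using assms by blast
  have "component_of ?V Kpq_E v = ?V" if v: "v \<in> ?V" for v
  proof
    show "component_of ?V Kpq_E v \<subseteq> ?V" using comp_sub[of ?V Kpq_E v] v by auto
    show "?V \<subseteq> component_of ?V Kpq_E v"
    proof
      fix u assume u: "u \<in> ?V"
      have "(adj_in ?V Kpq_E)\<^sup>*\<^sup>* v u"
      proof (cases "isl u = isl v")
        case False
        then have "adj_in ?V Kpq_E v u" using u v by (auto simp: adj_in_def Kpq_E_def)
        then show ?thesis by blast
      next
        case True
        define w where "w = (if isl v then Inr b else Inl a)"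
        have w: "w \<in> ?V" "isl w \<noteq> isl v" using ab by (auto simp: w_def)
        have "adj_in ?V Kpq_E v w" "adj_in ?V Kpq_E w u" using w u v True by (auto simp: adj_in_def Kpq_E_def)
        then show ?thesis by (meson rtranclp.rtrancl_into_rtrancl rtranclp.rtrancl_refl)
      qed
      then show "u \<in> component_of ?V Kpq_E v" by (simp add: component_of_def)
    qed
  qed
  moreover have "?V \<noteq> {}" using ab by blast
  ultimately show ?thesis unfolding components_def by auto
qed

lemma card_V: "finite A \<Longrightarrow> finite B \<Longrightarrow> card (Inl ` A \<union> Inr ` B) = card A + card B"
  by (subst card_Un_disjoint) (auto simp: card_image)

lemma vimage_LR[simp]: "Inl -` (Inl ` a \<union> Inr ` b) = a" "Inr -` (Inl ` a \<union> Inr ` b) = b"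
  by auto

lemma LR_inj: "Inl ` a \<union> Inr ` b = Inl ` A \<union> Inr ` B \<Longrightarrow> a = A \<and> b = B"
  by (metis vimage_LR)

lemma sa_Kpq_gen:
  assumes "finite A" "finite B"
  shows "sa (Inl ` A \<union> Inr ` B) Kpq_E = fpq (card A) (card B)"
  using assms
proof (induction "card A + card B" arbitrary: A B rule: less_induct)
  case less
  let ?V = "Inl ` A \<union> Inr ` B"
  show ?case
  proof (cases "A = {} \<and> B = {}")
    case True then show ?thesis by (simp add: fpq_axis sa_empty)
  next
    case ne: False
    have fin: "finite ?V" using less.prems by auto
    show ?thesis
    proof (cases "A = {} \<or> B = {}")
      case True
      then obtain v where v: "v \<in> ?V" and nos: "\<And>u. \<not> adj_in ?V Kpq_E v u"
      proof -
        obtain v where v: "v \<in> ?V" using ne by blast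
        have "\<And>u. \<not> adj_in ?V Kpq_E v u" using True v by (auto simp: adj_in_def Kpq_E_def)
        then show ?thesis by (rule that[OF v])
      qed
      have comp: "component_of ?V Kpq_E v = {v}"
        unfolding component_of_def by (rule set_eqI) (simp add: rtranclp_nosucc[of "adj_in ?V Kpq_E" v, OF nos])
      have "{v} \<in> components ?V Kpq_E" unfolding components_def
        using v comp by (metis image_eqI)
      then have "\<exists>C \<in> components ?V Kpq_E. odd (card C)"
        by (intro bexI[where x="{v}"]) simp_all
      moreover have "fpq (card A) (card B) = 0"
        using True ne less.prems by (subst fpq_axis) auto
      ultimately show ?thesis using ne fin by (simp add: sa_zero)
    next
      case False
      then have AB: "A \<noteq> {}" "B \<noteq> {}" by auto
      have pos: "card A > 0" "card B > 0" using AB less.prems by (auto simp: card_gt_0_iff)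
      note comps = components_one[OF AB]
      show ?thesis
      proof (cases "odd (card A + card B)")
        case True
        then show ?thesis using comps card_V[OF less.prems] ne fin fpq_odd[OF True] by (simp add: sa_zero)
      next
        case ev: False
        have subV: "\<And>V'. V' \<subseteq> ?V \<Longrightarrow> Inl ` (Inl -` V') \<union> Inr ` (Inr -` V') = V'"
        proof
          fix V' assume "V' \<subseteq> ?V"
          show "V' \<subseteq> Inl ` (Inl -` V') \<union> Inr ` (Inr -` V')"
          proof
            fix z assume "z \<in> V'" then show "z \<in> Inl ` (Inl -` V') \<union> Inr ` (Inr -` V')"
              by (cases z) auto
          qed
        qed auto
        have "sa ?V Kpq_E = - (\<Sum>V' \<in> {V'. V' \<subset> ?V}. sa V' Kpq_E)"
          using ev comps card_V[OF less.prems] ne fin by (intro sa_rec) auto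
        also have "(\<Sum>V' \<in> {V'. V' \<subset> ?V}. sa V' Kpq_E)
            = (\<Sum>AB' \<in> Pow A \<times> Pow B - {(A,B)}. sa (Inl ` fst AB' \<union> Inr ` snd AB') Kpq_E)"
          apply (rule sum.reindex_bij_witness[where i = "\<lambda>AB'. Inl ` fst AB' \<union> Inr ` snd AB'"
               and j = "\<lambda>V'. (Inl -` V', Inr -` V')"])
          apply (use subV in \<open>auto dest: LR_inj\<close>)
          done
        also have "\<dots> = (\<Sum>AB' \<in> Pow A \<times> Pow B - {(A,B)}. fpq (card (fst AB')) (card (snd AB')))"
        proof (rule sum.cong[OF refl])
          fix AB' assume "AB' \<in> Pow A \<times> Pow B - {(A,B)}"
          then obtain A' B' where e: "AB' = (A', B')" "A' \<subseteq> A" "B' \<subseteq> B" "A' \<noteq> A \<or> B' \<noteq> B" by auto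
          have fA: "finite A'" "finite B'" using e less.prems finite_subset by auto
          have "card A' \<le> card A" "card B' \<le> card B" using e less.prems by (auto intro: card_mono)
          moreover have "card A' < card A \<or> card B' < card B" using e less.prems
            by (meson psubset_card_mono psubsetI)
          ultimately have "card A' + card B' < card A + card B" by linarith
          then show "sa (Inl ` fst AB' \<union> Inr ` snd AB') Kpq_E = fpq (card (fst AB')) (card (snd AB'))"
            using less.hyps fA e by simp
        qed
        also have "\<dots> = (\<Sum>AB' \<in> Pow A \<times> Pow B. fpq (card (fst AB')) (card (snd AB'))) - fpq (card A) (card B)"
          using less.prems by (subst sum_diff1) auto
        also have "(\<Sum>AB' \<in> Pow A \<times> Pow B. fpq (card (fst AB')) (card (snd AB')))
            = (\<Sum>A' \<in> Pow A. \<Sum>B' \<in> Pow B. fpq (card A') (card B'))"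
          by (simp add: sum.cartesian_product case_prod_beta)
        also have "\<dots> = (\<Sum>A' \<in> Pow A. \<Sum>b\<le>card B. of_nat (card B choose b) * fpq (card A') b)"
          using less.prems by (simp add: pow_card_sum)
        also have "\<dots> = (\<Sum>a\<le>card A. of_nat (card A choose a) * (\<Sum>b\<le>card B. of_nat (card B choose b) * fpq a b))"
          using less.prems by (simp add: pow_card_sum[where h = "\<lambda>a. \<Sum>b\<le>card B. of_nat (card B choose b) * fpq a b"])
        also have "\<dots> = (\<Sum>ab \<in> {..card A} \<times> {..card B}. int ((card A choose fst ab) * (card B choose snd ab)) * fpq (fst ab) (snd ab))"
          by (simp add: sum.cartesian_product sum_distrib_left mult.assoc case_prod_beta)
        also have "\<dots> = (\<Sum>ab \<in> {..card A} \<times> {..card B} - {(card A, card B)}. int ((card A choose fst ab) * (card B choose snd ab)) * fpq (fst ab) (snd ab)) + fpq (card A) (card B)"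
          by (subst sum_diff1) auto
        finally show ?thesis using pos ev by (simp add: fpq_rec)
      qed
    qed
  qed
qed

lemma sa_Kpq: "sa (Kpq_V p q) Kpq_E = fpq p q"
  using sa_Kpq_gen[of "{..<p}" "{..<q}"] by (simp add: Kpq_V_def)



lemma fpq_conv:
  assumes "even (p + q)"
  shows "(\<Sum>ab \<in> {..p} \<times> {..q}. int ((p choose fst ab) * (q choose snd ab)) * fpq (fst ab) (snd ab))
         = (if p = 0 \<or> q = 0 then 1 else 0)"
proof (cases "p = 0 \<or> q = 0")
  case True
  let ?g = "\<lambda>ab. int ((p choose fst ab) * (q choose snd ab)) * fpq (fst ab) (snd ab)"
  have "sum ?g ({..p} \<times> {..q}) = ?g (0,0) + sum ?g ({..p} \<times> {..q} - {(0,0)})"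
    by (rule sum.remove) auto
  moreover have "sum ?g ({..p} \<times> {..q} - {(0,0)}) = 0"
  proof (rule sum.neutral, rule ballI)
    fix ab assume "ab \<in> {..p} \<times> {..q} - {(0,0)}"
    then show "?g ab = 0"
      using True by (cases ab) (auto simp: fpq_axis)
  qed
  ultimately show ?thesis using True by (simp add: fpq_axis)
next
  case False
  then show ?thesis using assms
    by (subst sum.remove[of _ "(p,q)"]) (auto simp: fpq_rec[of p q])
qed

lemma fpq_bound: "real_of_int \<bar>fpq p q\<bar> \<le> 4 ^ (p + q) * fact p * fact q"
proof (induction "p + q" arbitrary: p q rule: less_induct)
  case less
  show ?case
  proof (cases "p = 0 \<or> q = 0 \<or> odd (p + q)")
    case True
    then have "\<bar>fpq p q\<bar> \<le> 1" by (auto simp: fpq_axis fpq_odd)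
    moreover have "(1::real) \<le> 4 ^ (p + q) * fact p * fact q"
      by (metis fact_ge_1 mult_ge1_I one_le_power one_le_numeral)
    ultimately show ?thesis by (smt (verit) of_int_le_1_iff)
  next
    case False
    then have pq: "p \<noteq> 0" "q \<noteq> 0" "even (p + q)" by auto
    let ?S = "{..p} \<times> {..q} - {(p,q)}"
    have "real_of_int \<bar>fpq p q\<bar> = \<bar>\<Sum>ab \<in> ?S. real ((p choose fst ab) * (q choose snd ab)) * real_of_int (fpq (fst ab) (snd ab))\<bar>"
      using pq by (simp add: fpq_rec[of p q])
    also have "\<dots> \<le> (\<Sum>ab \<in> ?S. real ((p choose fst ab) * (q choose snd ab)) * real_of_int \<bar>fpq (fst ab) (snd ab)\<bar>)"
      by (rule order_trans[OF sum_abs]) (simp add: abs_mult)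
    also have "\<dots> \<le> (\<Sum>ab \<in> ?S. fact p * fact q * 4 ^ (fst ab + snd ab))"
    proof (rule sum_mono)
      fix ab assume ab: "ab \<in> ?S"
      obtain a b where e: "ab = (a, b)" by force
      have le: "a \<le> p" "b \<le> q" "a + b < p + q" using ab e by auto
      have IH: "real_of_int \<bar>fpq a b\<bar> \<le> 4 ^ (a + b) * fact a * fact b"
        using less.hyps[OF le(3)] .
      have ca: "real (p choose a) * fact a \<le> fact p"
      proof -
        have "fact a * fact (p - a) * real (p choose a) = fact p"
          using binomial_fact_lemma[OF le(1)] by (metis of_nat_fact of_nat_mult)
        moreover have "(1::real) \<le> fact (p - a)" by (rule fact_ge_1)
        ultimately show ?thesis
          by (smt (verit, ccfv_SIG) fact_ge_zero mult.commute mult_le_cancel_left1 mult.assoc of_nat_0_le_iff mult_nonneg_nonneg)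
      qed
      have cb: "real (q choose b) * fact b \<le> fact q"
      proof -
        have "fact b * fact (q - b) * real (q choose b) = fact q"
          using binomial_fact_lemma[OF le(2)] by (metis of_nat_fact of_nat_mult)
        moreover have "(1::real) \<le> fact (q - b)" by (rule fact_ge_1)
        ultimately show ?thesis
          by (smt (verit, ccfv_SIG) fact_ge_zero mult.commute mult_le_cancel_left1 mult.assoc of_nat_0_le_iff mult_nonneg_nonneg)
      qed
      have "real ((p choose a) * (q choose b)) * real_of_int \<bar>fpq a b\<bar>
           \<le> real (p choose a) * real (q choose b) * (4 ^ (a + b) * fact a * fact b)"
        using IH by (simp add: mult_left_mono)
      also have "\<dots> = (real (p choose a) * fact a) * (real (q choose b) * fact b) * 4 ^ (a + b)"
        by (simp add: algebra_simps)
      also have "\<dots> \<le> fact p * fact q * 4 ^ (a + b)"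
        using ca cb by (intro mult_right_mono mult_mono) auto
      finally show "real ((p choose fst ab) * (q choose snd ab)) * real_of_int \<bar>fpq (fst ab) (snd ab)\<bar>
           \<le> fact p * fact q * 4 ^ (fst ab + snd ab)" using e by simp
    qed
    also have "\<dots> = fact p * fact q * (\<Sum>ab \<in> ?S. 4 ^ (fst ab + snd ab))"
      by (simp add: sum_distrib_left)
    also have "(\<Sum>ab \<in> ?S. (4::real) ^ (fst ab + snd ab)) = (\<Sum>a\<le>p. 4 ^ a) * (\<Sum>b\<le>q. 4 ^ b) - 4 ^ (p + q)"
      by (subst sum_diff1) (auto simp: sum_product sum.cartesian_product power_add case_prod_beta)
    also have "\<dots> \<le> 4 ^ (p + q)"
    proof -
      have g: "(\<Sum>a\<le>n. (4::real) ^ a) = (4 ^ Suc n - 1) / 3" for n :: nat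
        by (induction n) (auto simp: field_simps)
      have "(\<Sum>a\<le>p. (4::real) ^ a) * (\<Sum>b\<le>q. 4 ^ b) \<le> (4 ^ Suc p / 3) * (4 ^ Suc q / 3)"
      proof -
        have h: "(1::real) \<le> 4 ^ q" "(1::real) \<le> 4 ^ p" by simp_all
        have h2: "(1::real) \<le> 4 * 4 ^ q" "(1::real) \<le> 4 * 4 ^ p" using h by linarith+
        show ?thesis unfolding g by (rule mult_mono) (use h2 in \<open>simp_all\<close>)
      qed
      also have "\<dots> = 16 / 9 * 4 ^ (p + q)" by (simp add: power_add)
      finally have "(\<Sum>a\<le>p. (4::real) ^ a) * (\<Sum>b\<le>q. 4 ^ b) \<le> 16 / 9 * 4 ^ (p + q)" .
      moreover have "(0::real) \<le> 4 ^ (p + q)" by simp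
      ultimately show ?thesis by linarith
    qed
    finally show ?thesis by (simp add: mult_left_mono mult.commute mult.left_commute)
  qed
qed



lemma has_sum_prod:
  fixes U :: "'a \<Rightarrow> real" and V :: "'b \<Rightarrow> real"
  assumes aU: "(\<lambda>a. norm (U a)) summable_on A" and aV: "(\<lambda>b. norm (V b)) summable_on B"
    and hU: "(U has_sum SU) A" and hV: "(V has_sum SV) B"
  shows "((\<lambda>(a,b). U a * V b) has_sum (SU * SV)) (A \<times> B)"
    and "(\<lambda>x. norm (case x of (a,b) \<Rightarrow> U a * V b)) summable_on (A \<times> B)"
proof -
  show abs: "(\<lambda>x. norm (case x of (a,b) \<Rightarrow> U a * V b)) summable_on (A \<times> B)"
  proof (rule iffD2[OF Infinite_Sum.abs_summable_on_Sigma_iff], intro conjI ballI)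
    fix a assume "a \<in> A"
    show "(\<lambda>b. norm (case (a, b) of (a, b) \<Rightarrow> U a * V b)) summable_on B"
      using summable_on_cmult_right[OF aV, of "\<bar>U a\<bar>"] by (simp add: abs_mult)
  next
    have "(\<lambda>a. \<bar>U a\<bar> * infsum (\<lambda>b. \<bar>V b\<bar>) B) summable_on A"
      using summable_on_cmult_left[OF aU] by simp
    then show "(\<lambda>a. norm (\<Sum>\<^sub>\<infinity>b\<in>B. norm (case (a, b) of (a, b) \<Rightarrow> U a * V b))) summable_on A"
      by (simp add: abs_mult infsum_cmult_right' infsum_nonneg)
  qed
  show "((\<lambda>(a,b). U a * V b) has_sum (SU * SV)) (A \<times> B)"
  proof (rule has_sum_SigmaI)
    show "((\<lambda>b. case (a, b) of (a, b) \<Rightarrow> U a * V b) has_sum U a * SV) B" for a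
      using has_sum_cmult_right[OF hV, of "U a"] by simp
    show "((\<lambda>a. U a * SV) has_sum SU * SV) A"
      by (rule has_sum_cmult_left[OF hU])
    show "(\<lambda>(a,b). U a * V b) summable_on A \<times> B"
      by (rule abs_summable_summable[OF abs])
  qed
qed

lemma has_sum_conv2:
  fixes P Q :: "nat \<times> nat \<Rightarrow> real"
  assumes aP: "(\<lambda>x. norm (P x)) summable_on UNIV" and aQ: "(\<lambda>x. norm (Q x)) summable_on UNIV"
    and hP: "(P has_sum SP) UNIV" and hQ: "(Q has_sum SQ) UNIV"
  shows "((\<lambda>(p,q). \<Sum>ab \<in> {..p} \<times> {..q}. P (p - fst ab, q - snd ab) * Q ab) has_sum (SP * SQ)) UNIV"
proof -
  have h1: "((\<lambda>(ij,ab). P ij * Q ab) has_sum (SP * SQ)) (UNIV \<times> UNIV)"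
    by (rule has_sum_prod(1)[OF aP aQ hP hQ])
  let ?S = "Sigma (UNIV :: (nat \<times> nat) set) (\<lambda>pq. {..fst pq} \<times> {..snd pq})"
  have h2: "((\<lambda>(pq,ab). P (fst pq - fst ab, snd pq - snd ab) * Q ab) has_sum (SP * SQ)) ?S"
  proof -
    have "((\<lambda>(pq,ab). P (fst pq - fst ab, snd pq - snd ab) * Q ab) has_sum (SP * SQ)) ?S
        = ((\<lambda>(ij,ab). P ij * Q ab) has_sum (SP * SQ)) (UNIV \<times> UNIV)"
      by (rule has_sum_reindex_bij_witness[where i = "\<lambda>(ij,ab). ((fst ij + fst ab, snd ij + snd ab), ab)"
            and j = "\<lambda>(pq,ab). ((fst pq - fst ab, snd pq - snd ab), ab)"]) auto
    then show ?thesis using h1 by simp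
  qed
  show ?thesis
  proof (rule has_sum_Sigma'[OF h2])
    fix pq :: "nat \<times> nat"
    show "((\<lambda>ab. case (pq, ab) of (pq,ab) \<Rightarrow> P (fst pq - fst ab, snd pq - snd ab) * Q ab)
       has_sum (case pq of (p,q) \<Rightarrow> \<Sum>ab \<in> {..p} \<times> {..q}. P (p - fst ab, q - snd ab) * Q ab)) ({..fst pq} \<times> {..snd pq})"
      by (cases pq) (auto intro: has_sum_finiteI)
  qed
qed



lemma exp_hs:
  fixes x :: real
  shows "((\<lambda>n. x^n / fact n) has_sum exp x) UNIV" and "(\<lambda>n. norm (x^n / fact n)) summable_on UNIV"
proof -
  have eq: "norm (x^n / fact n) = inverse (fact n) * \<bar>x\<bar>^n" for n
    by (simp add: abs_mult power_abs divide_inverse)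
  have s: "summable (\<lambda>n. norm (x^n / fact n))"
    unfolding eq by (rule summable_exp)
  have c: "(\<lambda>n. x^n / fact n) sums exp x"
    using exp_converges[of x] by (simp add: divide_inverse mult.commute)
  show "((\<lambda>n. x^n / fact n) has_sum exp x) UNIV"
    by (rule norm_summable_imp_has_sum[OF s c])
  show "(\<lambda>n. norm (x^n / fact n)) summable_on UNIV"
    by (rule norm_summable_imp_summable_on) (use s in simp)
qed

lemma cosh_hs:
  fixes x :: real
  shows "((\<lambda>n. if even n then x^n / fact n else 0) has_sum cosh x) UNIV"
proof -
  have s0: "summable (\<lambda>n. norm (x^n / fact n))"
    using exp_hs(2)[of x] summable_on_imp_summable by blast
  have s: "summable (\<lambda>n. norm (if even n then x^n / fact n else 0))"
    by (rule summable_comparison_test[OF _ s0]) auto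
  have c: "(\<lambda>n. if even n then x^n / fact n else 0) sums cosh x"
  proof -
    have "(\<lambda>n. if even n then x ^ n /\<^sub>R fact n else 0) = (\<lambda>n. if even n then x^n / fact n else 0)"
      by (rule ext) (simp add: divide_inverse mult.commute)
    then show ?thesis using cosh_converges[of x] by simp
  qed
  show ?thesis by (rule norm_summable_imp_has_sum[OF s c])
qed

lemma geom_hs:
  fixes c :: real
  assumes "\<bar>c\<bar> < 1"
  shows "((\<lambda>n. c^n) has_sum (1 / (1 - c))) UNIV" and "(\<lambda>n. norm (c^n)) summable_on UNIV"
proof -
  have s: "summable (\<lambda>n. norm (c^n))"
    using summable_geometric[of "\<bar>c\<bar>"] assms by (simp add: power_abs)
  show "((\<lambda>n. c^n) has_sum (1 / (1 - c))) UNIV"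
    by (rule norm_summable_imp_has_sum[OF s geometric_sums]) (use assms in simp)
  show "(\<lambda>n. norm (c^n)) summable_on UNIV"
    by (rule norm_summable_imp_summable_on) (use s in simp)
qed



lemma term_eq:
  fixes x y :: real
  assumes "a \<le> p" "b \<le> q"
  shows "(if even ((p - a) + (q - b)) then x ^ (p - a) / fact (p - a) * (y ^ (q - b) / fact (q - b)) else 0) *
           (real_of_int (fpq a b) * (x ^ a / fact a) * (y ^ b / fact b))
       = x ^ p / fact p * (y ^ q / fact q) *
           (if even (p + q) then real_of_int (int ((p choose a) * (q choose b)) * fpq a b) else 0)"
proof (cases "odd (a + b)")
  case True
  then show ?thesis by (simp add: fpq_odd)
next
  case False
  have par: "even ((p - a) + (q - b)) \<longleftrightarrow> even (p + q)"
    using assms False by (metis (no_types, lifting) add.assoc add.commute even_add le_add_diff_inverse)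
  show ?thesis
  proof (cases "even (p + q)")
    case False
    have h1: "\<not> even (p - a + (q - b))" using par False by blast
    show ?thesis by (simp only: h1 False if_False mult_zero_left mult_zero_right)
  next
    case True
    have xp: "x ^ (p - a) * x ^ a = x ^ p" using assms by (simp add: power_add[symmetric])
    have yq: "y ^ (q - b) * y ^ b = y ^ q" using assms by (simp add: power_add[symmetric])
    have cp: "real (p choose a) = fact p / (fact a * fact (p - a))" using assms by (simp add: binomial_fact)
    have cq: "real (q choose b) = fact q / (fact b * fact (q - b))" using assms by (simp add: binomial_fact)
    have "(x ^ (p - a) / fact (p - a) * (y ^ (q - b) / fact (q - b))) * (real_of_int (fpq a b) * (x ^ a / fact a) * (y ^ b / fact b))
        = (x ^ (p - a) * x ^ a) * (y ^ (q - b) * y ^ b) * real_of_int (fpq a b) / (fact (p - a) * fact a * fact (q - b) * fact b)"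
      by (simp add: field_simps)
    also have "\<dots> = x ^ p / fact p * (y ^ q / fact q) * (real (p choose a) * real (q choose b) * real_of_int (fpq a b))"
      unfolding xp yq cp cq by (simp add: field_simps)
    finally show ?thesis using True par by simp
  qed
qed



lemma main_fixed:
  fixes x y :: real
  assumes x: "\<bar>x\<bar> < 1/4" and y: "\<bar>y\<bar> < 1/4"
  shows "((\<lambda>(p, q). real_of_int (fpq p q) * (x ^ p / fact p) * (y ^ q / fact q))
      has_sum ((cosh x + cosh y - 1) / cosh (x + y))) UNIV"
proof -
  define T where "T = (\<lambda>(p, q). real_of_int (fpq p q) * (x ^ p / fact p) * (y ^ q / fact q))"
  define D where "D = (\<lambda>(i, j). if even (i + j) then x ^ i / fact i * (y ^ j / fact j) else (0::real))"
  define R where "R = (\<lambda>(p, q). if even (p + q) \<and> (p = 0 \<or> q = 0) then x ^ p / fact p * (y ^ q / fact q) else (0::real))"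
  have gx: "\<bar>4 * \<bar>x\<bar>\<bar> < 1" "\<bar>4 * \<bar>y\<bar>\<bar> < 1" using x y by auto
  have G: "(\<lambda>z. norm (case z of (p, q) \<Rightarrow> (4 * \<bar>x\<bar>) ^ p * (4 * \<bar>y\<bar>) ^ q)) summable_on UNIV"
    using has_sum_prod(2)[OF geom_hs(2)[OF gx(1)] geom_hs(2)[OF gx(2)] geom_hs(1)[OF gx(1)] geom_hs(1)[OF gx(2)]]
    by simp
  have Tle: "norm (T z) \<le> norm (case z of (p, q) \<Rightarrow> (4 * \<bar>x\<bar>) ^ p * (4 * \<bar>y\<bar>) ^ q)" for z
  proof (cases z)
    case (Pair p q)
    have "norm (T z) = real_of_int \<bar>fpq p q\<bar> * (\<bar>x\<bar> ^ p * \<bar>y\<bar> ^ q) / (fact p * fact q)"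
      by (simp add: T_def Pair abs_mult power_abs)
    also have "\<dots> \<le> (4 ^ (p + q) * fact p * fact q) * (\<bar>x\<bar> ^ p * \<bar>y\<bar> ^ q) / (fact p * fact q)"
      by (intro divide_right_mono mult_right_mono fpq_bound) auto
    also have "\<dots> = (4 * \<bar>x\<bar>) ^ p * (4 * \<bar>y\<bar>) ^ q"
      by (simp add: power_add power_mult_distrib)
    finally show ?thesis by (simp add: Pair)
  qed
  have aT: "(\<lambda>z. norm (T z)) summable_on UNIV"
    by (rule Infinite_Sum.abs_summable_on_comparison_test[OF G]) (use Tle in simp)
  then obtain S where hT: "(T has_sum S) UNIV"
    using abs_summable_summable summable_on_def by blast
  define E1 where "E1 = (\<lambda>z. case z of (i, j) \<Rightarrow> x ^ i / fact i * (y ^ j / fact j))"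
  define E2 where "E2 = (\<lambda>z. case z of (i, j) \<Rightarrow> (-x) ^ i / fact i * ((-y) ^ j / fact j))"
  have hE1: "(E1 has_sum (exp x * exp y)) UNIV" and aE1: "(\<lambda>z. norm (E1 z)) summable_on UNIV"
    using has_sum_prod[OF exp_hs(2)[of x] exp_hs(2)[of y] exp_hs(1)[of x] exp_hs(1)[of y]]
    by (simp_all add: E1_def)
  have hE2: "(E2 has_sum (exp (-x) * exp (-y))) UNIV"
    using has_sum_prod[OF exp_hs(2)[of "-x"] exp_hs(2)[of "-y"] exp_hs(1)[of "-x"] exp_hs(1)[of "-y"]]
    by (simp_all add: E2_def)
  have DE: "D z = (E1 z + E2 z) / 2" for z
  proof (cases z)
    case (Pair i j)
    have "(-x) ^ i * (-y) ^ j = ((-1) ^ i * x ^ i) * ((-1) ^ j * y ^ j)"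
      by (simp only: power_minus[of x i] power_minus[of y j])
    also have "\<dots> = (-1) ^ (i + j) * (x ^ i * y ^ j)"
      by (simp add: power_add)
    finally have "(-x) ^ i * (-y) ^ j = (-1) ^ (i + j) * (x ^ i * y ^ j)" .
    then have e2: "E2 z = (-1) ^ (i + j) * E1 z" by (simp add: E1_def E2_def Pair)
    show ?thesis
    proof (cases "even (i + j)")
      case True
      then have "E2 z = E1 z" using e2 by simp
      then show ?thesis using True by (simp add: D_def E1_def Pair)
    next
      case False
      then have "E2 z = - E1 z" using e2 by simp
      then show ?thesis using False by (simp add: D_def Pair)
    qed
  qed
  have hD: "(D has_sum cosh (x + y)) UNIV"
  proof -
    have "((\<lambda>z. (E1 z + E2 z) / 2) has_sum ((exp x * exp y + exp (-x) * exp (-y)) / 2)) UNIV"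
      using has_sum_cmult_left[OF has_sum_add[OF hE1 hE2], of "1/2"] by simp
    moreover have "(exp x * exp y + exp (-x) * exp (-y)) / 2 = cosh (x + y)"
      by (simp add: cosh_def exp_add[symmetric])
    moreover have "D = (\<lambda>z. (E1 z + E2 z) / 2)" by (rule ext) (rule DE)
    ultimately show ?thesis by simp
  qed
  have aD: "(\<lambda>z. norm (D z)) summable_on UNIV"
    by (rule Infinite_Sum.abs_summable_on_comparison_test[OF aE1]) (auto simp: D_def E1_def)
  have hC: "((\<lambda>(p,q). \<Sum>ab \<in> {..p} \<times> {..q}. D (p - fst ab, q - snd ab) * T ab) has_sum (cosh (x + y) * S)) UNIV"
    by (rule has_sum_conv2[OF aD aT hD hT])
  have CR: "(\<lambda>(p,q). \<Sum>ab \<in> {..p} \<times> {..q}. D (p - fst ab, q - snd ab) * T ab) = R"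
  proof (rule ext, clarsimp)
    fix p q :: nat
    have "(\<Sum>ab \<in> {..p} \<times> {..q}. D (p - fst ab, q - snd ab) * T ab)
        = (\<Sum>ab \<in> {..p} \<times> {..q}. x ^ p / fact p * (y ^ q / fact q) *
           (if even (p + q) then real_of_int (int ((p choose fst ab) * (q choose snd ab)) * fpq (fst ab) (snd ab)) else 0))"
    proof (rule sum.cong[OF refl])
      fix ab assume "ab \<in> {..p} \<times> {..q}"
      then obtain a b where ab: "ab = (a, b)" "a \<le> p" "b \<le> q" by auto
      show "D (p - fst ab, q - snd ab) * T ab = x ^ p / fact p * (y ^ q / fact q) *
           (if even (p + q) then real_of_int (int ((p choose fst ab) * (q choose snd ab)) * fpq (fst ab) (snd ab)) else 0)"
        unfolding ab(1) D_def T_def prod.case fst_conv snd_conv by (rule term_eq[OF ab(2,3)])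
    qed
    also have "\<dots> = x ^ p / fact p * (y ^ q / fact q) *
           (if even (p + q) then real_of_int (\<Sum>ab \<in> {..p} \<times> {..q}. int ((p choose fst ab) * (q choose snd ab)) * fpq (fst ab) (snd ab)) else 0)"
      by (cases "even (p + q)") (simp_all add: sum_distrib_left of_int_sum)
    also have "\<dots> = R (p, q)"
    proof (cases "even (p + q)")
      case True
      have conv: "(\<Sum>ab \<in> {..p} \<times> {..q}. int ((p choose fst ab) * (q choose snd ab)) * fpq (fst ab) (snd ab))
         = (if p = 0 \<or> q = 0 then 1 else 0)" by (rule fpq_conv[OF True])
      show ?thesis unfolding conv using True by (simp add: R_def)
    next
      case False
      then show ?thesis by (simp add: R_def)
    qed
    finally show "(\<Sum>ab \<in> {..p} \<times> {..q}. D (p - fst ab, q - snd ab) * T ab) = R (p, q)" .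
  qed
  define cx where "cx = (\<lambda>n. if even n then x ^ n / fact n else (0::real))"
  define cy where "cy = (\<lambda>n. if even n then y ^ n / fact n else (0::real))"
  have R1: "((\<lambda>z. if snd z = (0::nat) then cx (fst z) else 0) has_sum cosh x) UNIV"
  proof -
    have "((\<lambda>z. cx (fst z)) has_sum cosh x) (range (\<lambda>p. (p, 0::nat)))"
    proof -
      have "inj (\<lambda>p. (p, 0::nat))" by (auto simp: inj_on_def)
      then have "((\<lambda>z. cx (fst z)) has_sum cosh x) (range (\<lambda>p. (p, 0::nat))) \<longleftrightarrow> (cx has_sum cosh x) UNIV"
        by (subst has_sum_reindex) (simp_all add: o_def)
      then show ?thesis using cosh_hs[of x] by (simp add: cx_def)
    qed
    then show ?thesis
    proof -
      have "((\<lambda>z. if snd z = (0::nat) then cx (fst z) else 0) has_sum cosh x) UNIV \<longleftrightarrow> ((\<lambda>z. cx (fst z)) has_sum cosh x) (range (\<lambda>p. (p, 0::nat)))"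
        by (rule has_sum_cong_neutral[where S = UNIV and T = "range (\<lambda>p. (p, 0::nat))" and f = "\<lambda>z. if snd z = (0::nat) then cx (fst z) else 0" and g = "\<lambda>z. cx (fst z)"]) (auto simp: image_iff)
      with \<open>((\<lambda>z. cx (fst z)) has_sum cosh x) (range (\<lambda>p. (p, 0::nat)))\<close> show ?thesis by blast
    qed
  qed
  have R2: "((\<lambda>z. if fst z = (0::nat) then cy (snd z) else 0) has_sum cosh y) UNIV"
  proof -
    have "((\<lambda>z. cy (snd z)) has_sum cosh y) (range (\<lambda>q. (0::nat, q)))"
    proof -
      have "inj (\<lambda>q. (0::nat, q))" by (auto simp: inj_on_def)
      then have "((\<lambda>z. cy (snd z)) has_sum cosh y) (range (\<lambda>q. (0::nat, q))) \<longleftrightarrow> (cy has_sum cosh y) UNIV"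
        by (subst has_sum_reindex) (simp_all add: o_def)
      then show ?thesis using cosh_hs[of y] by (simp add: cy_def)
    qed
    then show ?thesis
    proof -
      have "((\<lambda>z. if fst z = (0::nat) then cy (snd z) else 0) has_sum cosh y) UNIV \<longleftrightarrow> ((\<lambda>z. cy (snd z)) has_sum cosh y) (range (\<lambda>q. (0::nat, q)))"
        by (rule has_sum_cong_neutral[where S = UNIV and T = "range (\<lambda>q. (0::nat, q))" and f = "\<lambda>z. if fst z = (0::nat) then cy (snd z) else 0" and g = "\<lambda>z. cy (snd z)"]) (auto simp: image_iff)
      with \<open>((\<lambda>z. cy (snd z)) has_sum cosh y) (range (\<lambda>q. (0::nat, q)))\<close> show ?thesis by blast
    qed
  qed
  have R0: "((\<lambda>z. if z = (0::nat, 0::nat) then 1 else (0::real)) has_sum 1) UNIV"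
    by (rule has_sum_finite_neutralI[where B = "{(0,0)}"]) auto
  have hR: "(R has_sum (cosh x + cosh y - 1)) UNIV"
  proof -
    have "((\<lambda>z. (if snd z = (0::nat) then cx (fst z) else 0) + (if fst z = (0::nat) then cy (snd z) else 0)
              + - (if z = (0::nat, 0::nat) then 1 else (0::real))) has_sum (cosh x + cosh y + - 1)) UNIV"
      by (intro has_sum_add R1 R2) (subst has_sum_uminus, use R0 in simp)
    moreover have "(\<lambda>z. (if snd z = (0::nat) then cx (fst z) else 0) + (if fst z = (0::nat) then cy (snd z) else 0)
              + - (if z = (0::nat, 0::nat) then 1 else (0::real))) = R"
      by (rule ext) (auto simp: R_def cx_def cy_def)
    ultimately show ?thesis by simp
  qed
  have "cosh (x + y) * S = cosh x + cosh y - 1"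
    using hC hR CR has_sum_unique by metis
  moreover have "cosh (x + y) > 0" by (rule cosh_real_pos)
  ultimately have "S = (cosh x + cosh y - 1) / cosh (x + y)"
    by (simp add: field_simps)
  then show ?thesis using hT by (simp add: T_def)
qed


theorem mainTheorem6:
  shows "\<exists>r>0. \<forall>x y :: real. \<bar>x\<bar> < r \<and> \<bar>y\<bar> < r \<longrightarrow>
    ((\<lambda>(p, q). real_of_int (sa (Kpq_V p q) Kpq_E) * (x ^ p / fact p) * (y ^ q / fact q))
      has_sum ((cosh x + cosh y - 1) / cosh (x + y))) UNIV"
proof (intro exI[of _ "1/4"] conjI allI impI)
  fix x y :: real
  assume "\<bar>x\<bar> < 1/4 \<and> \<bar>y\<bar> < 1/4"
  then show "((\<lambda>(p, q). real_of_int (sa (Kpq_V p q) Kpq_E) * (x ^ p / fact p) * (y ^ q / fact q))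
      has_sum ((cosh x + cosh y - 1) / cosh (x + y))) UNIV"
    using main_fixed[of x y] by (simp add: sa_Kpq)
qed simp

end
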